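(* Let $A_0,A_1,\ldots,A_n\in M_d(\mathbb C)$ and $X_{\mathrm{free}}=A_0\otimes1+\sum_{i=1}^nA_i\otimes s_i$. For every integer $p\ge2$, \[ \varphi[X_{\mathrm{free}}^p]=\varphi[X_{\mathrm{free}}^{p-1}]\,A_0+\sum_{i=1}^n\sum_{k=0}^{p-2}\varphi[X_{\mathrm{free}}^k]\,A_i\,\varphi[X_{\mathrm{free}}^{p-2-k}]\,A_i . \] Moreover, for every $B\in M_d(\mathbb C)$ and integers $p,q\ge1$, \begin{align*} \varphi[X_{\mathrm{free}}^p(B\otimes1)X_{\mathrm{free}}^q]&=\varphi[X_{\mathrm{free}}^p(B\otimes1)X_{\mathrm{free}}^{q-1}]\,A_0+\sum_{i=1}^n\sum_{k=0}^{p-1}\varphi[X_{\mathrm{free}}^k]\,A_i\,\varphi[X_{\mathrm{free}}^{p-1-k}(B\otimes1)X_{\mathrm{free}}^{q-1}]\,A_i\\ &\quad+\mathbb 1_{\{q\ge2\}}\sum_{i=1}^n\sum_{k=0}^{q-2}\varphi[X_{\mathrm{free}}^p(B\otimes1)X_{\mathrm{free}}^k]\,A_i\,\varphi[X_{\mathrm{free}}^{q-2-k}]\,A_i . \end{align*}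
   Context: $(\mathcal A,\tau)$ is a $C^*$-probability space with faithful tracial state $\tau$ containing freely independent standard semicircular elements $s_1,\ldots,s_n$; $1$ is its unit. $\varphi=\mathrm{Id}\otimes\tau:M_d(\mathbb C)\otimes\mathcal A\to M_d(\mathbb C)$ is the partial trace, i.e. $\varphi[\sum_jM_j\otimes a_j]=\sum_j\tau(a_j)M_j$; $X^0=I\otimes1$. *)

theory Defs
  imports "HOL-Analysis.Analysis" "HOL-Computational_Algebra.Polynomial"
begin

definition cstar_prob_space ::
  "(complex \<Rightarrow> 'a::ring_1 \<Rightarrow> 'a) \<Rightarrow> ('a \<Rightarrow> 'a) \<Rightarrow> ('a \<Rightarrow> real) \<Rightarrow> ('a \<Rightarrow> complex) \<Rightarrow> bool"
where
  "cstar_prob_space sc st nm tau \<longleftrightarrow>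
     \<comment> \<open>complex algebra\<close>
     (\<forall>a. sc 1 a = a) \<and>
     (\<forall>c e a. sc c (sc e a) = sc (c * e) a) \<and>
     (\<forall>c a b. sc c (a + b) = sc c a + sc c b) \<and>
     (\<forall>c e a. sc (c + e) a = sc c a + sc e a) \<and>
     (\<forall>c a b. sc c (a * b) = sc c a * b) \<and>
     (\<forall>c a b. sc c (a * b) = a * sc c b) \<and>
     \<comment> \<open>involution\<close>
     (\<forall>a. st (st a) = a) \<and>
     (\<forall>a b. st (a + b) = st a + st b) \<and>
     (\<forall>a b. st (a * b) = st b * st a) \<and>
     (\<forall>c a. st (sc c a) = sc (cnj c) (st a)) \<and>
     \<comment> \<open>Banach algebra norm with the C*-identity\<close>
     (\<forall>a. 0 \<le> nm a) \<and>
     (\<forall>a. nm a = 0 \<longleftrightarrow> a = 0) \<and>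
     (\<forall>a b. nm (a + b) \<le> nm a + nm b) \<and>
     (\<forall>c a. nm (sc c a) = cmod c * nm a) \<and>
     (\<forall>a b. nm (a * b) \<le> nm a * nm b) \<and>
     (\<forall>a. nm (st a * a) = (nm a)\<^sup>2) \<and>
     (\<forall>f::nat \<Rightarrow> 'a. (\<forall>e>0. \<exists>N. \<forall>m\<ge>N. \<forall>k\<ge>N. nm (f m - f k) < e)
         \<longrightarrow> (\<exists>L. (\<lambda>k. nm (f k - L)) \<longlonglongrightarrow> 0)) \<and>
     \<comment> \<open>faithful tracial state\<close>
     (\<forall>a b. tau (a + b) = tau a + tau b) \<and>
     (\<forall>c a. tau (sc c a) = c * tau a) \<and>
     tau 1 = 1 \<and>
     (\<forall>a. tau (st a * a) \<in> \<real> \<and> 0 \<le> Re (tau (st a * a))) \<and>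
     (\<forall>a b. tau (a * b) = tau (b * a)) \<and>
     (\<forall>a. tau (st a * a) = 0 \<longrightarrow> a = 0)"

definition peval :: "(complex \<Rightarrow> 'a::ring_1 \<Rightarrow> 'a) \<Rightarrow> complex poly \<Rightarrow> 'a \<Rightarrow> 'a" where
  "peval sc p a = (\<Sum>k\<le>degree p. sc (coeff p k) (a ^ k))"

definition catalan :: "nat \<Rightarrow> nat" where
  "catalan m = ((2 * m) choose m) div (m + 1)"

definition std_semicircular ::
  "(complex \<Rightarrow> 'a::ring_1 \<Rightarrow> 'a) \<Rightarrow> ('a \<Rightarrow> 'a) \<Rightarrow> ('a \<Rightarrow> complex) \<Rightarrow> 'a \<Rightarrow> bool" where
  "std_semicircular sc st tau s \<longleftrightarrow> st s = s \<and>
     (\<forall>k. tau (s ^ k) = (if even k then of_nat (catalan (k div 2)) else 0))"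

definition free_family ::
  "(complex \<Rightarrow> 'a::ring_1 \<Rightarrow> 'a) \<Rightarrow> ('a \<Rightarrow> complex) \<Rightarrow> 'i set \<Rightarrow> ('i \<Rightarrow> 'a) \<Rightarrow> bool" where
  "free_family sc tau I x \<longleftrightarrow>
     (\<forall>m::nat. \<forall>(idx::nat \<Rightarrow> 'i) (p::nat \<Rightarrow> complex poly).
        1 \<le> m \<and> (\<forall>j<m. idx j \<in> I) \<and> (\<forall>j. Suc j < m \<longrightarrow> idx j \<noteq> idx (Suc j)) \<and>
        (\<forall>j<m. tau (peval sc (p j) (x (idx j))) = 0)
        \<longrightarrow> tau (prod_list (map (\<lambda>j. peval sc (p j) (x (idx j))) [0..<m])) = 0)"

text \<open>Elements of M_d(C) \<otimes> A are represented as d x d matrices with entries in A.\<close>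
definition mmul :: "('d::finite \<Rightarrow> 'd \<Rightarrow> 'a::ring_1) \<Rightarrow> ('d \<Rightarrow> 'd \<Rightarrow> 'a) \<Rightarrow> 'd \<Rightarrow> 'd \<Rightarrow> 'a" where
  "mmul M N = (\<lambda>i j. \<Sum>k\<in>UNIV. M i k * N k j)"

definition mone :: "'d::finite \<Rightarrow> 'd \<Rightarrow> 'a::ring_1" where
  "mone = (\<lambda>i j. if i = j then 1 else 0)"

primrec mpow :: "('d::finite \<Rightarrow> 'd \<Rightarrow> 'a::ring_1) \<Rightarrow> nat \<Rightarrow> 'd \<Rightarrow> 'd \<Rightarrow> 'a" where
  "mpow M 0 = mone"
| "mpow M (Suc k) = mmul (mpow M k) M"

definition tens1 :: "(complex \<Rightarrow> 'a::ring_1 \<Rightarrow> 'a) \<Rightarrow> complex^'d^'d \<Rightarrow> 'd::finite \<Rightarrow> 'd \<Rightarrow> 'a" where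
  "tens1 sc B = (\<lambda>i j. sc (B $ i $ j) 1)"

definition ptrace :: "('a \<Rightarrow> complex) \<Rightarrow> ('d::finite \<Rightarrow> 'd \<Rightarrow> 'a) \<Rightarrow> complex^'d^'d" where
  "ptrace tau M = (\<chi> i j. tau (M i j))"

definition Xfree :: "(complex \<Rightarrow> 'a::ring_1 \<Rightarrow> 'a) \<Rightarrow> (nat \<Rightarrow> complex^'d^'d) \<Rightarrow> (nat \<Rightarrow> 'a) \<Rightarrow> nat
    \<Rightarrow> 'd::finite \<Rightarrow> 'd \<Rightarrow> 'a" where
  "Xfree sc A s n = (\<lambda>i j. sc (A 0 $ i $ j) 1 + (\<Sum>k=1..n. sc (A k $ i $ j) (s k)))"

end

theory Submission
  imports Defs
begin

definition fop :: "nat \<Rightarrow> (nat list \<Rightarrow> complex) \<Rightarrow> nat list \<Rightarrow> complex" where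
 "fop x f = (\<lambda>y. f (x#y) + (case y of [] \<Rightarrow> 0 | z#y' \<Rightarrow> if z = x then f y' else 0))"

definition fw :: "nat list \<Rightarrow> (nat list \<Rightarrow> complex) \<Rightarrow> nat list \<Rightarrow> complex" where
 "fw w f = foldr fop w f"

definition dl :: "nat list \<Rightarrow> nat list \<Rightarrow> complex" where
 "dl v = (\<lambda>y. if y = v then 1 else 0)"

definition FM :: "nat list \<Rightarrow> complex" where "FM w = fw w (dl []) []"

definition GG :: "nat list \<Rightarrow> nat list \<Rightarrow> complex" where "GG w v = fw w (dl v) []"

definition SDsum :: "nat \<Rightarrow> (nat list \<Rightarrow> complex) \<Rightarrow> (nat list \<Rightarrow> complex) \<Rightarrow> nat list \<Rightarrow> complex" where
 "SDsum i f g w = (\<Sum>l<length w. if w!l = i then f (take l w) * g (drop (Suc l) w) else 0)"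

lemma SDsum_Nil[simp]: "SDsum i f g [] = 0"
  by (simp add: SDsum_def)

lemma SDsum_Cons: "SDsum i f g (y#u) = (if y = i then f [] * g u else 0) + SDsum i (\<lambda>a. f (y#a)) g u"
  unfolding SDsum_def length_Cons sum.lessThan_Suc_shift by (auto intro!: sum.cong)

lemma SDsum_add: "SDsum i (\<lambda>a. f a + f' a) g w = SDsum i f g w + SDsum i f' g w"
  unfolding SDsum_def by (simp add: sum.distrib[symmetric] distrib_right if_distrib cong: if_cong)

lemma SDsum_cmult: "SDsum i (\<lambda>a. c * f a) g w = c * SDsum i f g w"
  unfolding SDsum_def by (auto simp: sum_distrib_left intro!: sum.cong)

lemma SDsum_append: "SDsum i f g (u@v) = SDsum i f (\<lambda>b. g (b@v)) u + SDsum i (\<lambda>a. f (u@a)) g v"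
proof (induction u arbitrary: f)
  case Nil then show ?case by simp
next
  case (Cons y u)
  show ?case using Cons[of "\<lambda>a. f (y#a)"] by (simp add: SDsum_Cons)
qed

lemma SDsum_snoc: "SDsum i f g (u@[x]) = SDsum i f (\<lambda>b. g (b@[x])) u + (if x = i then f u * g [] else 0)"
  by (simp add: SDsum_append SDsum_Cons)

lemma SDsum_swap: "SDsum i f (SDsum x g h) u = SDsum x (SDsum i f g) h u"
proof (induction u arbitrary: f)
  case Nil then show ?case by simp
next
  case (Cons y u)
  have "SDsum x (SDsum i f g) h (y#u) = SDsum x (\<lambda>a. (if y = i then f [] else 0) * g a + SDsum i (\<lambda>a. f (y#a)) g a) h u"
    by (simp add: SDsum_Cons)
  also have "\<dots> = (if y = i then f [] else 0) * SDsum x g h u + SDsum x (SDsum i (\<lambda>a. f (y#a)) g) h u"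
    by (simp add: SDsum_add SDsum_cmult)
  finally show ?case using Cons[of "\<lambda>a. f (y#a)"] by (simp add: SDsum_Cons)
qed

lemma SDsum_cong:
  assumes "\<And>a. length a < length w \<Longrightarrow> set a \<subseteq> set w \<Longrightarrow> f a = f' a"
    and "\<And>b. length b < length w \<Longrightarrow> set b \<subseteq> set w \<Longrightarrow> g b = g' b"
  shows "SDsum i f g w = SDsum i f' g' w"
  unfolding SDsum_def
proof (rule sum.cong[OF refl])
  fix l assume l: "l \<in> {..<length w}"
  have "f (take l w) = f' (take l w)" using l by (intro assms(1)) (auto dest: in_set_takeD)
  moreover have "g (drop (Suc l) w) = g' (drop (Suc l) w)" using l by (intro assms(2)) (auto dest: in_set_dropD)
  ultimately show "(if w ! l = i then f (take l w) * g (drop (Suc l) w) else 0) =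
         (if w ! l = i then f' (take l w) * g' (drop (Suc l) w) else 0)" by simp
qed

lemma fw_Nil[simp]: "fw [] f = f" by (simp add: fw_def)
lemma fw_Cons: "fw (x#w) f = fop x (fw w f)" by (simp add: fw_def)
lemma fw_append: "fw (u@v) f = fw u (fw v f)" by (simp add: fw_def)

lemma fop_add: "fop x (\<lambda>y. f y + g y) = (\<lambda>y. fop x f y + fop x g y)"
  by (auto simp: fop_def split: list.split)
lemma fop_cmult: "fop x (\<lambda>y. c * f y) = (\<lambda>y. c * fop x f y)"
  by (auto simp: fop_def algebra_simps split: list.split)
lemma fop_zero: "fop x (\<lambda>y. 0) = (\<lambda>y. 0)"
  by (auto simp: fop_def split: list.split)

lemma fw_add: "fw w (\<lambda>y. f y + g y) = (\<lambda>y. fw w f y + fw w g y)"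
  by (induction w) (simp_all add: fw_Cons fop_add)
lemma fw_cmult: "fw w (\<lambda>y. c * f y) = (\<lambda>y. c * fw w f y)"
  by (induction w) (simp_all add: fw_Cons fop_cmult)
lemma fw_zero: "fw w (\<lambda>y. 0) = (\<lambda>y. 0)"
  by (induction w) (simp_all add: fw_Cons fop_zero)
lemma fw_diff: "fw w (\<lambda>y. f y - g y) = (\<lambda>y. fw w f y - fw w g y)"
proof -
  have "fw w (\<lambda>y. f y + (-1) * g y) = (\<lambda>y. fw w f y + (-1) * fw w g y)" by (simp only: fw_add fw_cmult)
  then show ?thesis by simp
qed
lemma fw_sum_list: "fw w (\<lambda>y. \<Sum>p\<leftarrow>L. h p y) y' = (\<Sum>p\<leftarrow>L. fw w (h p) y')"
proof (induction L arbitrary: y')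
  case Nil then show ?case by (simp add: fw_zero)
next
  case (Cons a L) then show ?case by (simp add: fw_add)
qed

lemma fop_dl: "fop x (dl v) = (\<lambda>y. dl (x#v) y + (if v \<noteq> [] \<and> hd v = x then dl (tl v) y else 0))"
  unfolding fop_def dl_def by (rule ext) (cases v; auto split: list.split)

lemma GG_snoc: "GG (u@[x]) v = GG u (x#v) + (if v \<noteq> [] \<and> hd v = x then GG u (tl v) else 0)"
proof -
  have "fw (u@[x]) (dl v) = fw u (fop x (dl v))" by (simp add: fw_append fw_Cons)
  also have "\<dots> = fw u (\<lambda>y. dl (x#v) y + (if v \<noteq> [] \<and> hd v = x then 1 else 0) * dl (tl v) y)"
    by (simp add: fop_dl)
  finally show ?thesis by (simp add: GG_def fw_add fw_cmult)
qed

primrec QQ :: "nat list \<Rightarrow> nat list \<Rightarrow> complex" where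
  "QQ [] w = FM w"
| "QQ (i#v) w = SDsum i (QQ v) FM w"

lemma QQ_Nil_fun[simp]: "QQ [] = FM" by (rule ext) simp
lemma QQ_Cons_fun: "QQ (i#v) = SDsum i (QQ v) FM" by (rule ext) simp

lemma GG_QQ: "GG w v = QQ v w"
proof (induction "length w" arbitrary: w v rule: less_induct)
  case less
  show ?case
  proof (cases w rule: rev_cases)
    case Nil then show ?thesis by (cases v) (simp_all add: GG_def FM_def dl_def)
  next
    case (snoc u x)
    show ?thesis
    proof (cases v)
      case Nil then show ?thesis by (simp add: GG_def FM_def)
    next
      case (Cons i v')
      have IH: "\<And>b v. length b \<le> length u \<Longrightarrow> GG b v = QQ v b"
        using less snoc by simp
      have FMx: "FM (b@[x]) = SDsum x FM FM b" if "length b < length u" for b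
      proof -
        have "FM (b@[x]) = GG (b@[x]) []" by (simp add: GG_def FM_def)
        also have "\<dots> = GG b [x]" by (simp add: GG_snoc)
        also have "\<dots> = QQ [x] b" using IH that by simp
        finally show ?thesis by simp
      qed
      have "QQ v w = SDsum i (QQ v') (\<lambda>b. FM (b@[x])) u + (if x = i then QQ v' u else 0)"
        using Cons snoc by (simp add: SDsum_snoc FM_def dl_def)
      also have "SDsum i (QQ v') (\<lambda>b. FM (b@[x])) u = SDsum i (QQ v') (SDsum x FM FM) u"
        by (rule SDsum_cong) (simp_all add: FMx)
      also have "\<dots> = SDsum x (SDsum i (QQ v') FM) FM u" by (rule SDsum_swap)
      also have "\<dots> = QQ (x#v) u" using Cons by (simp add: QQ_Cons_fun)
      finally have "QQ v w = QQ (x#v) u + (if x = i then QQ v' u else 0)" .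
      moreover have "GG w v = GG u (x#v) + (if x = i then GG u v' else 0)"
        using snoc Cons by (simp add: GG_snoc)
      ultimately show ?thesis using IH by simp
    qed
  qed
qed

theorem FM_SD: "FM (w@[i]) = SDsum i FM FM w"
proof -
  have "FM (w@[i]) = GG (w@[i]) []" by (simp add: GG_def FM_def)
  also have "\<dots> = GG w [i]" by (simp add: GG_snoc)
  also have "\<dots> = SDsum i FM FM w" by (simp add: GG_QQ)
  finally show ?thesis .
qed

lemma fw_rep_free:
  assumes xi: "\<forall>y. \<xi> (i#y) = 0" and u: "u = [] \<or> hd u \<noteq> i"
  shows "fw (replicate m i) \<xi> (replicate k i @ u) = fw (replicate m i) (dl []) (replicate k i) * \<xi> u"
proof (induction m arbitrary: k)
  case 0
  show ?case using xi by (cases k) (simp_all add: dl_def)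
next
  case (Suc m)
  have "fw (replicate (Suc m) i) \<xi> (replicate k i @ u) =
        fw (replicate m i) \<xi> (replicate (Suc k) i @ u)
        + (case k of 0 \<Rightarrow> 0 | Suc k' \<Rightarrow> fw (replicate m i) \<xi> (replicate k' i @ u))"
    using u by (cases k; cases u) (auto simp: fw_Cons fop_def)
  moreover have "fw (replicate (Suc m) i) (dl []) (replicate k i) =
        fw (replicate m i) (dl []) (replicate (Suc k) i)
        + (case k of 0 \<Rightarrow> 0 | Suc k' \<Rightarrow> fw (replicate m i) (dl []) (replicate k' i))"
    by (cases k) (auto simp: fw_Cons fop_def)
  ultimately show ?case using Suc.IH[of "Suc k"] Suc.IH[of "k - 1"] by (cases k) (simp_all add: algebra_simps)
qed

fun adis :: "nat list \<Rightarrow> bool" where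
  "adis (x#y#r) = (x \<noteq> y \<and> adis (y#r))"
| "adis _ = True"

lemma adis_nth: "adis xs \<Longrightarrow> Suc j < length xs \<Longrightarrow> xs!j \<noteq> xs!Suc j"
proof (induction xs arbitrary: j rule: adis.induct)
  case (1 x y r) then show ?case by (cases j) auto
qed auto

fun VV :: "(nat \<times> nat) list \<Rightarrow> nat list \<Rightarrow> complex" where
  "VV [] = dl []"
| "VV ((i,k)#bs) = (\<lambda>y. fw (replicate k i) (VV bs) y - FM (replicate k i) * VV bs y)"

lemma VV_zero:
  "bs \<noteq> [] \<Longrightarrow> adis (map fst bs) \<Longrightarrow> (y = [] \<or> hd y \<noteq> fst (hd bs)) \<Longrightarrow> VV bs y = 0"
proof (induction bs arbitrary: y)
  case Nil then show ?case by simp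
next
  case (Cons b bs)
  obtain i k where b: "b = (i,k)" by force
  have xi: "\<forall>z. VV bs (i#z) = 0"
  proof
    fix z show "VV bs (i#z) = 0"
    proof (cases bs)
      case Nil then show ?thesis by (simp add: dl_def)
    next
      case (Cons b' bs')
      then have "adis (map fst bs)" "fst b' \<noteq> i" using Cons.prems b by auto
      then show ?thesis using Cons.IH[of "i#z"] \<open>bs = b'#bs'\<close> by auto
    qed
  qed
  have "fw (replicate k i) (VV bs) (replicate 0 i @ y) = fw (replicate k i) (dl []) (replicate 0 i) * VV bs y"
    by (rule fw_rep_free[OF xi]) (use Cons.prems b in auto)
  then show ?case using b by (simp add: FM_def)
qed

fun Exp :: "(nat \<times> nat) list \<Rightarrow> (complex \<times> nat list) list" where
  "Exp [] = [(1,[])]"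
| "Exp ((i,k)#bs) = map (\<lambda>(c,w). (c, replicate k i @ w)) (Exp bs) @ map (\<lambda>(c,w). (- FM (replicate k i) * c, w)) (Exp bs)"

definition blk :: "(nat \<times> nat) list \<Rightarrow> nat list" where
  "blk bs = concat (map (\<lambda>(i,k). replicate k i) bs)"

lemma blk_simps[simp]: "blk [] = []" "blk ((i,k)#bs) = replicate k i @ blk bs"
  by (simp_all add: blk_def)

lemma sum_list_neg: "(\<Sum>x\<leftarrow>L. - f x) = - (\<Sum>x\<leftarrow>L. f x :: 'b::ab_group_add)"
  by (induction L) auto

lemma VV_Exp: "VV bs y = (\<Sum>(c,w)\<leftarrow>Exp bs. c * fw w (dl []) y)"
proof (induction bs arbitrary: y)
  case Nil then show ?case by simp
next
  case (Cons b bs)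
  obtain i k where b: "b = (i,k)" by force
  have e: "VV bs = (\<lambda>y. \<Sum>(c,w)\<leftarrow>Exp bs. c * fw w (dl []) y)" using Cons by auto
  have "fw (replicate k i) (VV bs) y = (\<Sum>p\<leftarrow>Exp bs. fw (replicate k i) (\<lambda>y. case p of (c,w) \<Rightarrow> c * fw w (dl []) y) y)"
    unfolding e by (subst fw_sum_list) (simp add: case_prod_unfold)
  also have "\<dots> = (\<Sum>(c,w)\<leftarrow>Exp bs. c * fw (replicate k i @ w) (dl []) y)"
    by (simp add: case_prod_unfold fw_cmult fw_append)
  finally show ?case using b Cons
    by (simp add: comp_def case_prod_unfold sum_list_const_mult[symmetric] mult.assoc sum_list_neg)
qed

lemma Exp_struct:
  "Exp bs = (1, blk bs) # tl (Exp bs) \<and>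
   (\<forall>p\<in>set (Exp bs). length (snd p) \<le> length (blk bs) \<and> set (snd p) \<subseteq> set (blk bs)) \<and>
   ((\<forall>b\<in>set bs. snd b > 0) \<longrightarrow> (\<forall>p\<in>set (tl (Exp bs)). length (snd p) < length (blk bs)))"
proof (induction bs)
  case Nil then show ?case by simp
next
  case (Cons b bs)
  obtain i k where b: "b = (i,k)" by force
  obtain r where r: "Exp bs = (1, blk bs) # r" using Cons by blast
  have tl: "tl (Exp (b#bs)) = map (\<lambda>(c,w). (c, replicate k i @ w)) r @ map (\<lambda>(c,w). (- FM (replicate k i) * c, w)) (Exp bs)"
    using b r by simp
  show ?case
  proof (intro conjI)
    show "Exp (b#bs) = (1, blk (b#bs)) # tl (Exp (b#bs))" using b r by simp
    show "\<forall>p\<in>set (Exp (b#bs)). length (snd p) \<le> length (blk (b#bs)) \<and> set (snd p) \<subseteq> set (blk (b#bs))"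
      using Cons.IH b by fastforce
    show "(\<forall>b\<in>set (b#bs). snd b > 0) \<longrightarrow> (\<forall>p\<in>set (tl (Exp (b#bs))). length (snd p) < length (blk (b#bs)))"
    proof
      assume pos: "\<forall>b\<in>set (b#bs). snd b > 0"
      then have k: "k > 0" using b by auto
      have IH3: "\<forall>p\<in>set r. length (snd p) < length (blk bs)"
        using Cons.IH pos r by auto
      have IH2: "\<forall>p\<in>set (Exp bs). length (snd p) \<le> length (blk bs)" using Cons.IH by auto
      show "\<forall>p\<in>set (tl (Exp (b#bs))). length (snd p) < length (blk (b#bs))"
        unfolding tl using IH2 IH3 k b by fastforce
    qed
  qed
qed

theorem FM_free:
  assumes "bs \<noteq> []" "adis (map fst bs)" "\<forall>b\<in>set bs. snd b > 0"
  shows "FM (blk bs) = - (\<Sum>(c,w)\<leftarrow>tl (Exp bs). c * FM w)"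
proof -
  have "VV bs [] = 0" using VV_zero[OF assms(1,2)] by simp
  moreover have "VV bs [] = FM (blk bs) + (\<Sum>(c,w)\<leftarrow>tl (Exp bs). c * FM w)"
    unfolding VV_Exp FM_def by (subst Exp_struct[THEN conjunct1]) simp
  ultimately show ?thesis by (simp add: eq_neg_iff_add_eq_0)
qed

fun grp :: "nat list \<Rightarrow> (nat \<times> nat) list" where
  "grp [] = []"
| "grp (x#w) = (case grp w of [] \<Rightarrow> [(x,1)] | (y,k)#r \<Rightarrow> if x = y then (y, Suc k)#r else (x,1)#(y,k)#r)"

lemma grp_props: "blk (grp w) = w \<and> adis (map fst (grp w)) \<and> (\<forall>b\<in>set (grp w). snd b > 0) \<and> (grp w = [] \<longleftrightarrow> w = [])"
proof (induction w)
  case Nil then show ?case by simp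
next
  case (Cons x w)
  show ?case
  proof (cases "grp w")
    case Nil then show ?thesis using Cons by simp
  next
    case (Cons b r)
    obtain y k where b: "b = (y,k)" by force
    show ?thesis using Cons.IH \<open>grp w = b#r\<close> b
      by (cases r) (auto simp: replicate_append_same)
  qed
qed

definition bb :: "nat \<Rightarrow> nat \<Rightarrow> int" where
  "bb k j = int (k choose j) - (if j = 0 then 0 else int (k choose (j - 1)))"

lemma bb_0[simp]: "bb k 0 = 1" by (simp add: bb_def)

lemma bb_pascal: "j > 0 \<Longrightarrow> bb (Suc k) j = bb k j + bb k (j - 1)"
proof -
  assume "j > 0"
  then obtain t where t: "j = Suc t" by (cases j) auto
  show ?thesis
  proof (cases t)
    case 0 then show ?thesis using t by (simp add: bb_def)
  next
    case (Suc t') then show ?thesis using t by (simp add: bb_def)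
  qed
qed

lemma bb_mid: "bb (Suc (2*t)) (Suc t) = 0"
proof -
  have "Suc (2*t) choose Suc t = Suc (2*t) choose t"
    using binomial_symmetric[of "Suc t" "Suc (2*t)"] by simp
  then show ?thesis by (simp add: bb_def)
qed

lemma bb_cat: "bb (2*m) m = int ((2*m choose m) div (m+1))"
proof (cases m)
  case 0 then show ?thesis by simp
next
  case (Suc t)
  have e: "Suc t * (Suc (t + Suc t) choose Suc t) = Suc (Suc t) * (Suc (t + Suc t) choose t)"
    by (rule Suc_times_binomial_add)
  define a where "a = (2*m choose m)"
  define b where "b = (2*m choose t)"
  have m2: "2*m = Suc (t + Suc t)" using Suc by simp
  have ab: "m * a = (m+1) * b" unfolding a_def b_def m2 using e Suc by (metis Suc_eq_plus1)
  have ba: "b \<le> a" using ab Suc by (metis le_add1 less_or_eq_imp_le mult_le_cancel1 add_gr_0 mult_le_mono1 nat_mult_le_cancel_disj zero_less_Suc)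
  have "(m+1) * a = (m+1) * (a - b) + (m + 1) * b"
    using ba by (simp only: add_mult_distrib2[symmetric] le_add_diff_inverse2)
  then have "a = (m+1) * (a - b)" using ab by simp
  then have "a div (m+1) = a - b" by (metis div_mult_self1_is_m zero_less_Suc Suc_eq_plus1 mult.commute)
  then show ?thesis using Suc ba by (simp add: bb_def a_def b_def of_nat_diff)
qed

lemma D_rec: "fw (replicate (Suc k) i) (dl []) (replicate h i) =
   fw (replicate k i) (dl []) (replicate (Suc h) i) + (case h of 0 \<Rightarrow> 0 | Suc h' \<Rightarrow> fw (replicate k i) (dl []) (replicate h' i))"
  by (cases h) (simp_all add: fw_Cons fop_def)

lemma D_form: "fw (replicate k i) (dl []) (replicate h i) =
   (if h \<le> k \<and> even (k - h) then of_int (bb k ((k - h) div 2)) else 0)"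
proof (induction k arbitrary: h)
  case 0 then show ?case by (cases h) (simp_all add: dl_def)
next
  case (Suc k)
  show ?case
  proof (cases h)
    case 0
    have "fw (replicate (Suc k) i) (dl []) (replicate h i) = fw (replicate k i) (dl []) (replicate 1 i)"
      using 0 D_rec[of k i h] by simp
    also have "\<dots> = (if 1 \<le> k \<and> even (k - 1) then of_int (bb k ((k - 1) div 2)) else 0)"
      by (rule Suc.IH)
    also have "\<dots> = (if h \<le> Suc k \<and> even (Suc k - h) then of_int (bb (Suc k) ((Suc k - h) div 2)) else 0)"
    proof (cases "even k")
      case True then show ?thesis using 0 by (cases k) auto
    next
      case False
      then obtain t where t: "k = Suc (2*t)" by (metis oddE add.commute plus_1_eq_Suc)
      have "bb (Suc k) (Suc t) = bb k t" using bb_pascal[of "Suc t" k] bb_mid[of t] t by simp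
      then show ?thesis using 0 t by simp
    qed
    finally show ?thesis .
  next
    case (Suc h')
    have "fw (replicate (Suc k) i) (dl []) (replicate h i) =
       fw (replicate k i) (dl []) (replicate (Suc h) i) + fw (replicate k i) (dl []) (replicate h' i)"
      using Suc D_rec[of k i h] by simp
    also have "\<dots> = (if Suc h \<le> k \<and> even (k - Suc h) then of_int (bb k ((k - Suc h) div 2)) else 0)
        + (if h' \<le> k \<and> even (k - h') then of_int (bb k ((k - h') div 2)) else 0)"
      by (simp only: Suc.IH)
    also have "\<dots> = (if h \<le> Suc k \<and> even (Suc k - h) then of_int (bb (Suc k) ((Suc k - h) div 2)) else 0)"
    proof (cases "h' \<le> k \<and> even (k - h')")
      case False then show ?thesis using Suc by auto
    next
      case True
      then obtain j where j: "k = h' + 2*j" by (metis evenE le_add_diff_inverse)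
      show ?thesis
      proof (cases j)
        case 0 then show ?thesis using j Suc by simp
      next
        case (Suc t)
        have "bb (Suc k) j = bb k j + bb k (j - 1)" using Suc by (simp add: bb_pascal)
        then show ?thesis using j Suc \<open>h = Suc h'\<close> by (simp add: algebra_simps)
      qed
    qed
    finally show ?thesis .
  qed
qed

theorem FM_rep: "FM (replicate k i) = (if even k then of_nat ((2*(k div 2) choose (k div 2)) div (k div 2 + 1)) else 0)"
proof -
  have "FM (replicate k i) = fw (replicate k i) (dl []) (replicate 0 i)" by (simp add: FM_def)
  also have "\<dots> = (if even k then of_int (bb k (k div 2)) else 0)" by (simp only: D_form) simp
  also have "\<dots> = (if even k then of_nat ((2*(k div 2) choose (k div 2)) div (k div 2 + 1)) else 0)"
  proof (cases "even k")
    case True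
    then obtain m where "k = 2*m" by blast
    then show ?thesis using bb_cat[of m] by simp
  qed simp
  finally show ?thesis .
qed


locale cs =
  fixes sc :: "complex \<Rightarrow> 'a::ring_1 \<Rightarrow> 'a" and st :: "'a \<Rightarrow> 'a" and nm :: "'a \<Rightarrow> real"
    and tau :: "'a \<Rightarrow> complex"
  assumes C: "cstar_prob_space sc st nm tau"
begin

lemma sc_one[simp]: "sc 1 a = a" using C by (simp add: cstar_prob_space_def)
lemma sc_sc: "sc c (sc e a) = sc (c*e) a" using C by (simp add: cstar_prob_space_def)
lemma sc_add: "sc c (a + b) = sc c a + sc c b" using C by (simp add: cstar_prob_space_def)
lemma sc_addc: "sc (c + e) a = sc c a + sc e a" using C by (simp add: cstar_prob_space_def)
lemma sc_multl: "sc c a * b = sc c (a * b)" using C by (simp add: cstar_prob_space_def)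
lemma sc_multr: "a * sc c b = sc c (a * b)" using C unfolding cstar_prob_space_def by metis
lemma tau_add: "tau (a + b) = tau a + tau b" using C by (simp add: cstar_prob_space_def)
lemma tau_sc: "tau (sc c a) = c * tau a" using C by (simp add: cstar_prob_space_def)
lemma tau_1[simp]: "tau 1 = 1" using C by (simp add: cstar_prob_space_def)
lemma tau_comm: "tau (a * b) = tau (b * a)" using C by (simp add: cstar_prob_space_def)

lemma sc_0c[simp]: "sc 0 a = 0"
  using sc_addc[of 0 0 a] by simp
lemma sc_0[simp]: "sc c 0 = 0"
  using sc_add[of c 0 0] by simp
lemma sc_neg: "sc (- c) a = - sc c a"
  using sc_addc[of c "-c" a] by (simp add: eq_neg_iff_add_eq_0 add.commute)
lemma sc_diffc: "sc (c - e) a = sc c a - sc e a"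
  using sc_addc[of c "-e" a] sc_neg[of e a] by simp
lemma sc_minus: "sc c (- a) = - sc c a"
  using sc_add[of c a "-a"] by (simp add: eq_neg_iff_add_eq_0 add.commute)
lemma sc_diff: "sc c (a - b) = sc c a - sc c b"
  using sc_add[of c a "-b"] sc_minus[of c b] by simp
lemma tau_0[simp]: "tau 0 = 0"
  using tau_add[of 0 0] by simp
lemma tau_minus: "tau (- a) = - tau a"
  using tau_add[of a "-a"] by (simp add: eq_neg_iff_add_eq_0 add.commute)
lemma tau_diff: "tau (a - b) = tau a - tau b"
  using tau_add[of a "-b"] tau_minus[of b] by simp
lemma tau_sum_list: "tau (\<Sum>x\<leftarrow>L. f x) = (\<Sum>x\<leftarrow>L. tau (f x))"
  by (induction L) (simp_all add: tau_add)
lemma tau_sum: "tau (\<Sum>x\<in>S. f x) = (\<Sum>x\<in>S. tau (f x))"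
  by (induction S rule: infinite_finite_induct) (simp_all add: tau_add)
lemma sc_sum: "sc c (\<Sum>x\<in>S. f x) = (\<Sum>x\<in>S. sc c (f x))"
  by (induction S rule: infinite_finite_induct) (simp_all add: sc_add)
lemma sc_sumc: "sc (\<Sum>x\<in>S. f x) a = (\<Sum>x\<in>S. sc (f x) a)"
  by (induction S rule: infinite_finite_induct) (simp_all add: sc_addc)

definition mon :: "(nat \<Rightarrow> 'a) \<Rightarrow> nat list \<Rightarrow> 'a" where
  "mon s w = prod_list (map s w)"

lemma mon_simps[simp]: "mon s [] = 1" "mon s (x#w) = s x * mon s w" "mon s (u@v) = mon s u * mon s v"
  "mon s (replicate k i) = s i ^ k"
  by (simp_all add: mon_def prod_list_replicate)

lemma sum_map_helper: "(\<Sum>(c,w)\<leftarrow>map (\<lambda>(c,w). (g c, h w)) L. sc c (mon s w)) = (\<Sum>(c,w)\<leftarrow>L. sc (g c) (mon s (h w)))"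
  by (induction L) auto

lemma prod_Exp: "prod_list (map (\<lambda>(i,k). s i ^ k - sc (FM (replicate k i)) 1) bs) = (\<Sum>(c,w)\<leftarrow>Exp bs. sc c (mon s w))"
proof (induction bs)
  case Nil then show ?case by simp
next
  case (Cons b bs)
  obtain i k where b: "b = (i,k)" by force
  let ?S = "(\<Sum>(c,w)\<leftarrow>Exp bs. sc c (mon s w))"
  have "(s i ^ k - sc (FM (replicate k i)) 1) * ?S = s i ^ k * ?S - sc (FM (replicate k i)) ?S"
    by (simp only: left_diff_distrib sc_multl mult_1_left)
  also have "s i ^ k * ?S = (\<Sum>(c,w)\<leftarrow>Exp bs. sc c (mon s (replicate k i @ w)))"
  proof -
    have "\<And>L. s i ^ k * (\<Sum>(c,w)\<leftarrow>L. sc c (mon s w)) = (\<Sum>(c,w)\<leftarrow>L. sc c (mon s (replicate k i @ w)))"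
    proof -
      fix L show "s i ^ k * (\<Sum>(c,w)\<leftarrow>L. sc c (mon s w)) = (\<Sum>(c,w)\<leftarrow>L. sc c (mon s (replicate k i @ w)))"
        by (induction L) (auto simp: distrib_left sc_multr)
    qed
    then show ?thesis .
  qed
  also have "sc (FM (replicate k i)) ?S = (\<Sum>(c,w)\<leftarrow>Exp bs. sc (FM (replicate k i) * c) (mon s w))"
  proof -
    have "\<And>L. sc (FM (replicate k i)) (\<Sum>(c,w)\<leftarrow>L. sc c (mon s w)) = (\<Sum>(c,w)\<leftarrow>L. sc (FM (replicate k i) * c) (mon s w))"
    proof -
      fix L show "sc (FM (replicate k i)) (\<Sum>(c,w)\<leftarrow>L. sc c (mon s w)) = (\<Sum>(c,w)\<leftarrow>L. sc (FM (replicate k i) * c) (mon s w))"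
        by (induction L) (auto simp: sc_add sc_sc)
    qed
    then show ?thesis .
  qed
  finally have e: "(s i ^ k - sc (FM (replicate k i)) 1) * ?S =
    (\<Sum>(c,w)\<leftarrow>Exp bs. sc c (mon s (replicate k i @ w))) - (\<Sum>(c,w)\<leftarrow>Exp bs. sc (FM (replicate k i) * c) (mon s w))" .
  have n: "\<And>L. (\<Sum>(c,w)\<leftarrow>L. sc (- FM (replicate k i) * c) (mon s w)) = - (\<Sum>(c,w)\<leftarrow>L. sc (FM (replicate k i) * c) (mon s w))"
  proof -
    fix L show "(\<Sum>(c,w)\<leftarrow>L. sc (- FM (replicate k i) * c) (mon s w)) = - (\<Sum>(c,w)\<leftarrow>L. sc (FM (replicate k i) * c) (mon s w))"
      by (induction L) (auto simp: sc_neg)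
  qed
  note m = sum_map_helper[of s]
  have m1: "(\<Sum>(c,w)\<leftarrow>map (\<lambda>(c,w). (c, replicate k i @ w)) (Exp bs). sc c (mon s w)) = (\<Sum>(c,w)\<leftarrow>Exp bs. sc c (mon s (replicate k i @ w)))"
    using m[of "\<lambda>c. c" "\<lambda>w. replicate k i @ w"] by simp
  have m2: "(\<Sum>(c,w)\<leftarrow>map (\<lambda>(c,w). (- FM (replicate k i) * c, w)) (Exp bs). sc c (mon s w)) = (\<Sum>(c,w)\<leftarrow>Exp bs. sc (- FM (replicate k i) * c) (mon s w))"
    using m[of "\<lambda>c. - FM (replicate k i) * c" "\<lambda>w. w"] by simp
  have "prod_list (map (\<lambda>(i,k). s i ^ k - sc (FM (replicate k i)) 1) (b#bs)) = (s i ^ k - sc (FM (replicate k i)) 1) * ?S"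
    using b Cons by simp
  also have "\<dots> = (\<Sum>(c,w)\<leftarrow>Exp (b#bs). sc c (mon s w))"
    unfolding e using m1 m2 n b by (simp del: mon_simps)
  finally show ?case .
qed

lemma peval_cent:
  assumes k: "k > 0"
  shows "peval sc (monom 1 k - [:c:]) x = x ^ k - sc c 1"
proof -
  let ?p = "monom 1 k - [:c:] :: complex poly"
  have cf: "coeff ?p j = (if k = j then 1 else 0) - (if j = 0 then c else 0)" for j
    by (cases j) (simp_all add: coeff_monom)
  have dg: "degree ?p = k"
  proof (rule antisym)
    show "degree ?p \<le> k"
      by (rule degree_diff_le) (simp_all add: degree_monom_le k)
    show "k \<le> degree ?p" using cf[of k] k by (intro le_degree) simp
  qed
  have "peval sc ?p x = (\<Sum>j\<le>k. sc ((if k = j then 1 else 0) - (if j = 0 then c else 0)) (x ^ j))"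
    unfolding peval_def dg cf by simp
  also have "\<dots> = (\<Sum>j\<le>k. (if k = j then x ^ j else 0) - (if j = 0 then sc c 1 else 0))"
    by (intro sum.cong refl) (simp add: sc_diffc)
  also have "\<dots> = x ^ k - sc c 1"
    by (simp add: sum_subtractf)
  finally show ?thesis .
qed

end

locale frs = cs sc st nm tau for sc :: "complex \<Rightarrow> 'a::ring_1 \<Rightarrow> 'a" and st nm tau +
  fixes s :: "nat \<Rightarrow> 'a" and n :: nat
  assumes semi: "\<forall>i\<in>{1..n}. std_semicircular sc st tau (s i)"
    and free: "free_family sc tau {1..n} s"
begin

lemma marg: "i \<in> {1..n} \<Longrightarrow> tau (s i ^ k) = FM (replicate k i)"
  using semi by (simp add: std_semicircular_def FM_rep catalan_def)

theorem tau_mon: "set w \<subseteq> {1..n} \<Longrightarrow> tau (mon s w) = FM w"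
proof (induction "length w" arbitrary: w rule: less_induct)
  case less
  show ?case
  proof (cases "w = []")
    case True then show ?thesis by (simp add: FM_def dl_def)
  next
    case False
    define bs where "bs = grp w"
    have bw: "blk bs = w" and ad: "adis (map fst bs)" and pos: "\<forall>b\<in>set bs. snd b > 0" and ne: "bs \<noteq> []"
      using grp_props[of w] False by (simp_all add: bs_def)
    have bset: "\<forall>b\<in>set bs. fst b \<in> {1..n}"
    proof
      fix b assume "b \<in> set bs"
      then have "fst b \<in> set (blk bs)" using pos by (force simp: blk_def)
      then show "fst b \<in> {1..n}" using less.prems bw by auto
    qed
    have "tau (prod_list (map (\<lambda>(i,k). s i ^ k - sc (FM (replicate k i)) 1) bs)) = 0"
    proof -
      define idx where "idx j = fst (bs!j)" for j
      define p where "p j = monom 1 (snd (bs!j)) - [:FM (replicate (snd (bs!j)) (fst (bs!j))):]" for j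
      have pv: "peval sc (p j) (s (idx j)) = (\<lambda>(i,k). s i ^ k - sc (FM (replicate k i)) 1) (bs!j)" if "j < length bs" for j
        using that pos unfolding p_def idx_def by (simp add: case_prod_unfold peval_cent)
      have "tau (prod_list (map (\<lambda>j. peval sc (p j) (s (idx j))) [0..<length bs])) = 0"
      proof (rule free[unfolded free_family_def, rule_format])
        show "1 \<le> length bs \<and> (\<forall>j<length bs. idx j \<in> {1..n}) \<and>
          (\<forall>j. Suc j < length bs \<longrightarrow> idx j \<noteq> idx (Suc j)) \<and>
          (\<forall>j<length bs. tau (peval sc (p j) (s (idx j))) = 0)"
        proof (intro conjI allI impI)
          show "1 \<le> length bs" using ne by (cases bs) auto
          fix j
          show "j < length bs \<Longrightarrow> idx j \<in> {1..n}" using bset unfolding idx_def by auto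
          show "Suc j < length bs \<Longrightarrow> idx j \<noteq> idx (Suc j)"
            using adis_nth[OF ad, of j] unfolding idx_def by simp
          assume j: "j < length bs"
          show "tau (peval sc (p j) (s (idx j))) = 0"
            using pv[OF j] marg[of "fst (bs!j)" "snd (bs!j)"] bset j
            by (simp add: case_prod_unfold tau_diff tau_sc)
        qed
      qed
      moreover have "map (\<lambda>j. peval sc (p j) (s (idx j))) [0..<length bs] = map (\<lambda>(i,k). s i ^ k - sc (FM (replicate k i)) 1) bs"
        by (rule nth_equalityI) (simp_all add: pv)
      ultimately show ?thesis by simp
    qed
    then have z: "(\<Sum>(c,w)\<leftarrow>Exp bs. c * tau (mon s w)) = 0"
      unfolding prod_Exp tau_sum_list by (simp add: case_prod_unfold tau_sc)
    obtain r where r: "Exp bs = (1, w) # r" using Exp_struct[of bs] bw by metis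
    have rl: "\<forall>p\<in>set r. length (snd p) < length w \<and> set (snd p) \<subseteq> set w"
      using Exp_struct[of bs] pos bw r by auto
    have "(\<Sum>(c,w)\<leftarrow>r. c * tau (mon s w)) = (\<Sum>(c,w)\<leftarrow>r. c * FM w)"
    proof -
      have "\<forall>p\<in>set r. tau (mon s (snd p)) = FM (snd p)"
        using rl less by auto
      then show ?thesis by (induction r) (auto simp: case_prod_unfold)
    qed
    moreover have "FM w = - (\<Sum>(c,w)\<leftarrow>r. c * FM w)"
      using FM_free[OF ne ad pos] bw r by simp
    ultimately show ?thesis using z r by (simp add: eq_neg_iff_add_eq_0, metis add_right_cancel)
  qed
qed

end


definition cm :: "complex \<Rightarrow> complex^'d^'d \<Rightarrow> complex^'d^'d" where
  "cm c M = (\<chi> a b. c * M$a$b)"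

lemma cm_nth[simp]: "cm c M $ a $ b = c * M$a$b" by (simp add: cm_def)
lemma mm_nth: "(P ** Q) $ a $ b = (\<Sum>k\<in>UNIV. P$a$k * Q$k$b)" by (simp add: matrix_matrix_mult_def)

lemma mm_sum_left: "(\<Sum>x\<in>I. P x) ** (Q::complex^'d^'d) = (\<Sum>x\<in>I. P x ** Q)"
  by (induction I rule: infinite_finite_induct) (simp_all add: vec_eq_iff mm_nth distrib_right sum.distrib)
lemma mm_sum_right: "(Q::complex^'d^'d) ** (\<Sum>x\<in>I. P x) = (\<Sum>x\<in>I. Q ** P x)"
  by (induction I rule: infinite_finite_induct) (simp_all add: matrix_add_ldistrib)
lemma mm_cm_left: "cm c P ** Q = cm c (P ** Q)"
  by (simp add: vec_eq_iff mm_nth sum_distrib_left mult.assoc)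
lemma mm_cm_right: "P ** cm c Q = cm c (P ** Q)"
  by (simp add: vec_eq_iff mm_nth sum_distrib_left mult_ac)
lemma cm_cm: "cm c (cm d P) = cm (c * d) P"
  by (simp add: vec_eq_iff mult.assoc)
lemma cm_add: "cm (c + d) P = cm c P + cm d P"
  by (simp add: vec_eq_iff distrib_right)
lemma cm_0[simp]: "cm 0 P = 0"
  by (simp add: vec_eq_iff)
lemma cm_sum: "cm (\<Sum>x\<in>I. f x) P = (\<Sum>x\<in>I. cm (f x) P)"
  by (induction I rule: infinite_finite_induct) (simp_all add: cm_add)
lemma cm_sum_right: "cm c (\<Sum>x\<in>I. P x) = (\<Sum>x\<in>I. cm c (P x))"
  by (simp add: vec_eq_iff sum_distrib_left)
lemma cm_if: "cm (if b then c else 0) P = (if b then cm c P else 0)"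
  by simp

primrec Aw :: "(nat \<Rightarrow> complex^'d^'d) \<Rightarrow> nat list \<Rightarrow> complex^'d^'d" where
  "Aw A [] = mat 1"
| "Aw A (j#w) = A j ** Aw A w"

lemma Aw_append: "Aw A (u@v) = Aw A u ** Aw A v"
  by (induction u) (simp_all add: matrix_mul_assoc)

definition W :: "nat \<Rightarrow> nat \<Rightarrow> nat list set" where
  "W n L = {w. length w = L \<and> set w \<subseteq> {0..n}}"

lemma finite_W[simp]: "finite (W n L)"
proof -
  have "W n L = {w. set w \<subseteq> {0..n} \<and> length w = L}" by (auto simp: W_def)
  then show ?thesis using finite_lists_length_eq[of "{0..n}" L] by simp
qed

lemma W_0[simp]: "W n 0 = {[]}" by (auto simp: W_def)

lemma bij_snoc: "bij_betw (\<lambda>(w,j). w @ [j]) (W n L \<times> {0..n}) (W n (Suc L))"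
proof (rule bij_betwI')
  fix x y assume "x \<in> W n L \<times> {0..n}" "y \<in> W n L \<times> {0..n}"
  then show "((case x of (w, j) \<Rightarrow> w @ [j]) = (case y of (w, j) \<Rightarrow> w @ [j])) = (x = y)"
    by (auto simp: W_def)
next
  fix x assume "x \<in> W n L \<times> {0..n}"
  then show "(case x of (w, j) \<Rightarrow> w @ [j]) \<in> W n (Suc L)" by (auto simp: W_def)
next
  fix w assume w: "w \<in> W n (Suc L)"
  then have "w \<noteq> []" by (auto simp: W_def)
  then have "w = butlast w @ [last w]" by simp
  moreover have "(butlast w, last w) \<in> W n L \<times> {0..n}"
    using w \<open>w \<noteq> []\<close> by (auto simp: W_def dest: in_set_butlastD) (metis last_in_set subsetD atLeastAtMost_iff)
  ultimately show "\<exists>x\<in>W n L \<times> {0..n}. w = (case x of (w, j) \<Rightarrow> w @ [j])" by force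
qed

lemma bij_mid: "l < L \<Longrightarrow> bij_betw (\<lambda>(u,v). u @ j # v) (W n l \<times> W n (L - 1 - l)) {w\<in>W n L. w!l = j}"
  if "j \<le> n"
proof (rule bij_betwI')
  fix x y assume "x \<in> W n l \<times> W n (L - 1 - l)" "y \<in> W n l \<times> W n (L - 1 - l)"
  then obtain u v u' v' where xy: "x = (u,v)" "y = (u',v')" "length u = l" "length u' = l"
    by (auto simp: W_def)
  then have "(u @ j # v = u' @ j # v') = (u = u' \<and> j # v = j # v')"
    by (intro append_eq_append_conv) simp
  then show "((case x of (u, v) \<Rightarrow> u @ j # v) = (case y of (u, v) \<Rightarrow> u @ j # v)) = (x = y)"
    using xy by simp
next
  fix x assume "l < L" "x \<in> W n l \<times> W n (L - 1 - l)"
  then show "(case x of (u, v) \<Rightarrow> u @ j # v) \<in> {w\<in>W n L. w!l = j}" using that by (auto simp: W_def nth_append)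
next
  fix w assume l: "l < L" and w: "w \<in> {w\<in>W n L. w!l = j}"
  then have "w = take l w @ j # drop (Suc l) w" using id_take_nth_drop[of l w] by (auto simp: W_def)
  moreover have "(take l w, drop (Suc l) w) \<in> W n l \<times> W n (L - 1 - l)"
    using w l by (auto simp: W_def dest: in_set_takeD in_set_dropD)
  ultimately show "\<exists>x\<in>W n l \<times> W n (L - 1 - l). w = (case x of (u, v) \<Rightarrow> u @ j # v)" by force
qed

lemma CL:
  fixes F :: "nat list \<Rightarrow> nat list \<Rightarrow> 'm::comm_monoid_add"
  assumes j: "j \<le> n"
  shows "(\<Sum>w\<in>W n L. \<Sum>l<L. if w!l = j then F (take l w) (drop (Suc l) w) else 0)
       = (\<Sum>l<L. \<Sum>u\<in>W n l. \<Sum>v\<in>W n (L - 1 - l). F u v)"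
proof -
  have "(\<Sum>w\<in>W n L. \<Sum>l<L. if w!l = j then F (take l w) (drop (Suc l) w) else 0)
      = (\<Sum>l<L. \<Sum>w\<in>W n L. if w!l = j then F (take l w) (drop (Suc l) w) else 0)"
    by (rule sum.swap)
  also have "\<dots> = (\<Sum>l<L. \<Sum>u\<in>W n l. \<Sum>v\<in>W n (L - 1 - l). F u v)"
  proof (rule sum.cong[OF refl])
    fix l assume "l \<in> {..<L}"
    then have l: "l < L" by simp
    have "(\<Sum>w\<in>W n L. if w!l = j then F (take l w) (drop (Suc l) w) else 0)
        = (\<Sum>w\<in>{w\<in>W n L. w!l = j}. F (take l w) (drop (Suc l) w))"
      by (simp add: sum.inter_filter)
    also have "\<dots> = (\<Sum>x\<in>W n l \<times> W n (L - 1 - l). F (take l ((\<lambda>(u,v). u @ j # v) x)) (drop (Suc l) ((\<lambda>(u,v). u @ j # v) x)))"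
      by (rule sum.reindex_bij_betw[symmetric, OF bij_mid[OF j l]])
    also have "\<dots> = (\<Sum>x\<in>W n l \<times> W n (L - 1 - l). F (fst x) (snd x))"
      by (rule sum.cong[OF refl]) (auto simp: W_def)
    also have "\<dots> = (\<Sum>u\<in>W n l. \<Sum>v\<in>W n (L - 1 - l). F u v)"
      by (simp add: sum.cartesian_product case_prod_unfold)
    finally show "(\<Sum>w\<in>W n L. if w!l = j then F (take l w) (drop (Suc l) w) else 0) = (\<Sum>u\<in>W n l. \<Sum>v\<in>W n (L - 1 - l). F u v)" .
  qed
  finally show ?thesis .
qed

lemma GEN:
  assumes j: "j \<le> n"
  shows "(\<Sum>w\<in>W n L. cm (SDsum j f g w) (P ** Aw A w ** Q))
       = (\<Sum>l<L. \<Sum>u\<in>W n l. \<Sum>v\<in>W n (L - 1 - l). cm (f u * g v) (P ** Aw A u ** A j ** Aw A v ** Q))"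
proof -
  have "(\<Sum>w\<in>W n L. cm (SDsum j f g w) (P ** Aw A w ** Q))
      = (\<Sum>w\<in>W n L. \<Sum>l<L. if w!l = j then (\<lambda>u v. cm (f u * g v) (P ** Aw A u ** A j ** Aw A v ** Q)) (take l w) (drop (Suc l) w) else 0)"
  proof (rule sum.cong[OF refl])
    fix w assume w: "w \<in> W n L"
    have "cm (SDsum j f g w) (P ** Aw A w ** Q) = (\<Sum>l<L. cm (if w!l = j then f (take l w) * g (drop (Suc l) w) else 0) (P ** Aw A w ** Q))"
      using w unfolding SDsum_def W_def by (simp add: cm_sum)
    also have "\<dots> = (\<Sum>l<L. if w!l = j then cm (f (take l w) * g (drop (Suc l) w)) (P ** Aw A (take l w) ** A j ** Aw A (drop (Suc l) w) ** Q) else 0)"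
    proof (rule sum.cong[OF refl])
      fix l assume "l \<in> {..<L}"
      then have "l < length w" using w by (simp add: W_def)
      then have e: "w!l = j \<Longrightarrow> Aw A w = Aw A (take l w) ** A j ** Aw A (drop (Suc l) w)"
        using id_take_nth_drop[of l w] by (metis Aw.simps(2) Aw_append matrix_mul_assoc)
      show "cm (if w!l = j then f (take l w) * g (drop (Suc l) w) else 0) (P ** Aw A w ** Q) =
         (if w!l = j then cm (f (take l w) * g (drop (Suc l) w)) (P ** Aw A (take l w) ** A j ** Aw A (drop (Suc l) w) ** Q) else 0)"
        using e by (simp add: matrix_mul_assoc)
    qed
    finally show "cm (SDsum j f g w) (P ** Aw A w ** Q) = (\<Sum>l<L. if w!l = j then (\<lambda>u v. cm (f u * g v) (P ** Aw A u ** A j ** Aw A v ** Q)) (take l w) (drop (Suc l) w) else 0)"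
      by simp
  qed
  also have "\<dots> = (\<Sum>l<L. \<Sum>u\<in>W n l. \<Sum>v\<in>W n (L - 1 - l). cm (f u * g v) (P ** Aw A u ** A j ** Aw A v ** Q))"
    by (rule CL[OF j])
  finally show ?thesis .
qed

lemma FACT: "(\<Sum>u\<in>U. cm (f u) (P u)) ** Q ** (\<Sum>v\<in>V. cm (g v) (R v)) ** S
   = (\<Sum>u\<in>U. \<Sum>v\<in>V. cm (f u * g v) (P u ** Q ** R v ** (S::complex^'d^'d)))"
proof -
  have "(\<Sum>u\<in>U. cm (f u) (P u)) ** Q ** (\<Sum>v\<in>V. cm (g v) (R v)) ** S
      = (\<Sum>v\<in>V. \<Sum>u\<in>U. cm (g v * f u) (P u ** Q ** R v ** S))"
    by (simp only: mm_sum_left mm_sum_right mm_cm_left mm_cm_right cm_cm cm_sum_right)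
  also have "\<dots> = (\<Sum>u\<in>U. \<Sum>v\<in>V. cm (f u * g v) (P u ** Q ** R v ** S))"
    by (subst sum.swap) (simp add: mult.commute)
  finally show ?thesis .
qed

lemma FACT2: "(\<Sum>u\<in>U. cm (f u) (P u)) ** Q ** (\<Sum>v\<in>V. \<Sum>w\<in>V'. cm (g v w) (R v w)) ** S
   = (\<Sum>u\<in>U. \<Sum>v\<in>V. \<Sum>w\<in>V'. cm (f u * g v w) (P u ** Q ** R v w ** (S::complex^'d^'d)))"
proof -
  have "(\<Sum>v\<in>V. \<Sum>w\<in>V'. cm (g v w) (R v w)) = (\<Sum>x\<in>V \<times> V'. cm (g (fst x) (snd x)) (R (fst x) (snd x)))"
    by (simp add: sum.cartesian_product case_prod_unfold)
  then show ?thesis by (simp add: FACT sum.cartesian_product case_prod_unfold)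
qed

lemma FACT3: "(\<Sum>u\<in>U. \<Sum>u'\<in>U'. cm (f u u') (P u u')) ** Q ** (\<Sum>v\<in>V. cm (g v) (R v)) ** S
   = (\<Sum>u\<in>U. \<Sum>u'\<in>U'. \<Sum>v\<in>V. cm (f u u' * g v) (P u u' ** Q ** R v ** (S::complex^'d^'d)))"
proof -
  have "(\<Sum>u\<in>U. \<Sum>u'\<in>U'. cm (f u u') (P u u')) = (\<Sum>x\<in>U \<times> U'. cm (f (fst x) (snd x)) (P (fst x) (snd x)))"
    by (simp add: sum.cartesian_product case_prod_unfold)
  then have "(\<Sum>u\<in>U. \<Sum>u'\<in>U'. cm (f u u') (P u u')) ** Q ** (\<Sum>v\<in>V. cm (g v) (R v)) ** S
     = (\<Sum>x\<in>U \<times> U'. \<Sum>v\<in>V. cm (f (fst x) (snd x) * g v) (P (fst x) (snd x) ** Q ** R v ** S))"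
    by (simp only: FACT)
  also have "\<dots> = (\<Sum>u\<in>U. \<Sum>u'\<in>U'. \<Sum>v\<in>V. cm (f u u' * g v) (P u u' ** Q ** R v ** (S::complex^'d^'d)))"
    unfolding sum.cartesian_product[where g="\<lambda>u u'. \<Sum>v\<in>V. cm (f u u' * g v) (P u u' ** Q ** R v ** S)" and A=U and B=U']
    by (simp add: case_prod_unfold)
  finally show ?thesis .
qed

lemma swap3: "(\<Sum>v\<in>V. \<Sum>l\<in>L. \<Sum>a\<in>A l. \<Sum>b\<in>B l. F v l a b) = (\<Sum>l\<in>L. \<Sum>a\<in>A l. \<Sum>b\<in>B l. \<Sum>v\<in>V. (F v l a b :: 'm::comm_monoid_add))"
proof -
  have "(\<Sum>v\<in>V. \<Sum>l\<in>L. \<Sum>a\<in>A l. \<Sum>b\<in>B l. F v l a b) = (\<Sum>l\<in>L. \<Sum>v\<in>V. \<Sum>a\<in>A l. \<Sum>b\<in>B l. F v l a b)"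
    by (rule sum.swap)
  also have "\<dots> = (\<Sum>l\<in>L. \<Sum>a\<in>A l. \<Sum>v\<in>V. \<Sum>b\<in>B l. F v l a b)"
    by (intro sum.cong refl sum.swap)
  also have "\<dots> = (\<Sum>l\<in>L. \<Sum>a\<in>A l. \<Sum>b\<in>B l. \<Sum>v\<in>V. F v l a b)"
    by (intro sum.cong refl sum.swap)
  finally show ?thesis .
qed

lemma SDsum_filter: "P j \<Longrightarrow> SDsum j (\<lambda>a. f (filter P a)) (\<lambda>b. g (filter P b)) w = SDsum j f g (filter P w)"
proof (induction w arbitrary: f)
  case Nil then show ?case by simp
next
  case (Cons y u)
  show ?case
  proof (cases "P y")
    case True
    have "SDsum j (\<lambda>a. f (filter P a)) (\<lambda>b. g (filter P b)) (y#u) =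
      (if y = j then f [] * g (filter P u) else 0) + SDsum j (\<lambda>a. (\<lambda>a. f (y#a)) (filter P a)) (\<lambda>b. g (filter P b)) u"
      using True by (simp add: SDsum_Cons)
    also have "\<dots> = SDsum j f g (filter P (y#u))"
      using True Cons.IH[of "\<lambda>a. f (y#a)"] Cons.prems by (simp add: SDsum_Cons)
    finally show ?thesis .
  next
    case False
    then have "y \<noteq> j" using Cons.prems by auto
    then show ?thesis using False Cons.IH[of "\<lambda>a. f a"] Cons.prems by (simp add: SDsum_Cons)
  qed
qed

context cs
begin

definition rep :: "('x \<Rightarrow> complex^'d^'d) \<Rightarrow> ('x \<Rightarrow> 'a) \<Rightarrow> 'x set \<Rightarrow> 'd::finite \<Rightarrow> 'd \<Rightarrow> 'a" where
  "rep C m I = (\<lambda>a b. \<Sum>x\<in>I. sc (C x $ a $ b) (m x))"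

lemma sc_prod: "sc c a * sc d b = sc (c * d) (a * b)"
  by (simp add: sc_multl sc_multr sc_sc mult.commute)

lemma rep_mul:
  assumes "finite I" "finite J"
  shows "mmul (rep C m I) (rep D m' J) = rep (\<lambda>(x,y). C x ** D y) (\<lambda>(x,y). m x * m' y) (I \<times> J)"
proof (intro ext)
  fix a b
  have "mmul (rep C m I) (rep D m' J) a b = (\<Sum>k\<in>UNIV. \<Sum>x\<in>I. \<Sum>y\<in>J. sc (C x $ a $ k * D y $ k $ b) (m x * m' y))"
    by (simp add: mmul_def rep_def sum_product sc_prod)
  also have "\<dots> = (\<Sum>x\<in>I. \<Sum>y\<in>J. \<Sum>k\<in>UNIV. sc (C x $ a $ k * D y $ k $ b) (m x * m' y))"
    by (subst sum.swap) (subst (2) sum.swap, rule refl)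
  also have "\<dots> = (\<Sum>x\<in>I. \<Sum>y\<in>J. sc ((C x ** D y) $ a $ b) (m x * m' y))"
    by (simp add: mm_nth sc_sumc)
  also have "\<dots> = rep (\<lambda>(x,y). C x ** D y) (\<lambda>(x,y). m x * m' y) (I \<times> J) a b"
    by (simp add: rep_def sum.cartesian_product case_prod_unfold)
  finally show "mmul (rep C m I) (rep D m' J) a b = rep (\<lambda>(x,y). C x ** D y) (\<lambda>(x,y). m x * m' y) (I \<times> J) a b" .
qed

lemma rep_reindex:
  assumes "bij_betw h I J" "\<And>x. x \<in> I \<Longrightarrow> C' (h x) = C x" "\<And>x. x \<in> I \<Longrightarrow> m' (h x) = m x"
  shows "rep C m I = rep C' m' J"
proof (intro ext)
  fix a b
  have "rep C' m' J a b = (\<Sum>x\<in>I. sc (C' (h x) $ a $ b) (m' (h x)))"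
    unfolding rep_def by (rule sum.reindex_bij_betw[symmetric, OF assms(1)])
  also have "\<dots> = rep C m I a b" unfolding rep_def using assms(2,3) by (intro sum.cong) auto
  finally show "rep C m I a b = rep C' m' J a b" by simp
qed

lemma ptrace_rep: "ptrace tau (rep C m I) = (\<Sum>x\<in>I. cm (tau (m x)) (C x))"
  by (simp add: vec_eq_iff ptrace_def rep_def tau_sum tau_sc mult.commute)

lemma mmul_assoc: "mmul (mmul P Q) R = mmul P (mmul Q R)"
proof (intro ext)
  fix a b
  have "mmul (mmul P Q) R a b = (\<Sum>k\<in>UNIV. \<Sum>l\<in>UNIV. P a l * Q l k * R k b)"
    by (simp add: mmul_def sum_distrib_right)
  also have "\<dots> = (\<Sum>l\<in>UNIV. \<Sum>k\<in>UNIV. P a l * (Q l k * R k b))"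
    by (subst sum.swap) (simp add: mult.assoc)
  also have "\<dots> = mmul P (mmul Q R) a b"
    by (simp add: mmul_def sum_distrib_left)
  finally show "mmul (mmul P Q) R a b = mmul P (mmul Q R) a b" .
qed

end

context frs
begin

definition S0 :: "nat \<Rightarrow> 'a" where "S0 j = (if j = 0 then 1 else s j)"

lemma mon_S0: "mon S0 w = mon s (filter (\<lambda>j. j \<noteq> 0) w)"
  by (induction w) (simp_all add: S0_def)

lemma tau_SD:
  assumes j: "j \<in> {1..n}" and w: "set w \<subseteq> {0..n}"
  shows "tau (mon S0 w * s j) = SDsum j (\<lambda>a. tau (mon S0 a)) (\<lambda>b. tau (mon S0 b)) w"
proof -
  let ?P = "\<lambda>j. j \<noteq> (0::nat)"
  have fw: "set (filter ?P w) \<subseteq> {1..n}" using w by auto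
  have "tau (mon S0 w * s j) = tau (mon s (filter ?P w @ [j]))" by (simp add: mon_S0)
  also have "\<dots> = FM (filter ?P w @ [j])" using fw j by (intro tau_mon) auto
  also have "\<dots> = SDsum j FM FM (filter ?P w)" by (rule FM_SD)
  also have "\<dots> = SDsum j (\<lambda>a. tau (mon s a)) (\<lambda>b. tau (mon s b)) (filter ?P w)"
    using fw by (intro SDsum_cong) (auto intro!: tau_mon[symmetric])
  also have "\<dots> = SDsum j (\<lambda>a. tau (mon s (filter ?P a))) (\<lambda>b. tau (mon s (filter ?P b))) w"
    using j by (intro SDsum_filter[symmetric]) auto
  also have "\<dots> = SDsum j (\<lambda>a. tau (mon S0 a)) (\<lambda>b. tau (mon S0 b)) w"
    by (simp add: mon_S0)
  finally show ?thesis .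
qed

lemma X_rep: "Xfree sc A s n = rep A S0 {0..n}"
proof (intro ext)
  fix a b
  have "rep A S0 {0..n} a b = sc (A 0 $ a $ b) (S0 0) + (\<Sum>k\<in>{Suc 0..n}. sc (A k $ a $ b) (S0 k))"
    unfolding rep_def by (subst sum.atLeast_Suc_atMost) auto
  also have "\<dots> = Xfree sc A s n a b"
    unfolding Xfree_def by (simp add: S0_def)
  finally show "Xfree sc A s n a b = rep A S0 {0..n} a b" by simp
qed

lemma mpow_rep: "mpow (rep A S0 {0..n}) p = rep (Aw A) (mon S0) (W n p)"
proof (induction p)
  case 0
  show ?case by (intro ext) (simp add: mone_def rep_def mat_def)
next
  case (Suc p)
  have "mpow (rep A S0 {0..n}) (Suc p) = mmul (rep (Aw A) (mon S0) (W n p)) (rep A S0 {0..n})"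
    using Suc by simp
  also have "\<dots> = rep (\<lambda>(x,y). Aw A x ** A y) (\<lambda>(x,y). mon S0 x * S0 y) (W n p \<times> {0..n})"
    by (rule rep_mul) simp_all
  also have "\<dots> = rep (Aw A) (mon S0) (W n (Suc p))"
    by (rule rep_reindex[OF bij_snoc]) (auto simp: Aw_append)
  finally show ?case .
qed

lemma tens1_rep: "tens1 sc B = rep (\<lambda>_. B) (\<lambda>_. 1) {()}"
  by (intro ext) (simp add: tens1_def rep_def)

lemma Y_rep: "mmul (mmul (mpow (rep A S0 {0..n}) a) (tens1 sc B)) (mpow (rep A S0 {0..n}) b)
  = rep (\<lambda>(u,v). Aw A u ** B ** Aw A v) (\<lambda>(u,v). mon S0 (u@v)) (W n a \<times> W n b)"
proof -
  have "mmul (mmul (mpow (rep A S0 {0..n}) a) (tens1 sc B)) (mpow (rep A S0 {0..n}) b)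
    = rep (\<lambda>(x,y). (case x of (u,z) \<Rightarrow> Aw A u ** B) ** Aw A y) (\<lambda>(x,y). (case x of (u,z) \<Rightarrow> mon S0 u * 1) * mon S0 y) ((W n a \<times> {()}) \<times> W n b)"
    unfolding mpow_rep tens1_rep by (simp add: rep_mul)
  also have "\<dots> = rep (\<lambda>(u,v). Aw A u ** B ** Aw A v) (\<lambda>(u,v). mon S0 (u@v)) (W n a \<times> W n b)"
  proof (rule rep_reindex)
    show "bij_betw (\<lambda>((u,z),v). (u,v)) ((W n a \<times> {()}) \<times> W n b) (W n a \<times> W n b)"
      by (rule bij_betwI') auto
  qed auto
  finally show ?thesis .
qed

lemma PA:
  assumes "finite I"
  shows "ptrace tau (mmul (rep C m I) (rep A S0 {0..n})) =
    (\<Sum>x\<in>I. cm (tau (m x)) (C x)) ** A 0 + (\<Sum>j\<in>{1..n}. \<Sum>x\<in>I. cm (tau (m x * s j)) (C x ** A j))"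
proof -
  have "ptrace tau (mmul (rep C m I) (rep A S0 {0..n})) = (\<Sum>x\<in>I. \<Sum>j\<in>{0..n}. cm (tau (m x * S0 j)) (C x ** A j))"
    using assms by (simp add: rep_mul ptrace_rep sum.cartesian_product case_prod_unfold)
  also have "\<dots> = (\<Sum>x\<in>I. cm (tau (m x)) (C x ** A 0) + (\<Sum>j\<in>{1..n}. cm (tau (m x * s j)) (C x ** A j)))"
  proof (rule sum.cong[OF refl])
    fix x
    show "(\<Sum>j\<in>{0..n}. cm (tau (m x * S0 j)) (C x ** A j)) = cm (tau (m x)) (C x ** A 0) + (\<Sum>j\<in>{1..n}. cm (tau (m x * s j)) (C x ** A j))"
      by (subst sum.atLeast_Suc_atMost) (auto simp: S0_def intro!: sum.cong)
  qed
  also have "\<dots> = (\<Sum>x\<in>I. cm (tau (m x)) (C x)) ** A 0 + (\<Sum>j\<in>{1..n}. \<Sum>x\<in>I. cm (tau (m x * s j)) (C x ** A j))"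
    by (simp add: sum.distrib mm_sum_left mm_cm_left sum.swap[of _ I])
  finally show ?thesis .
qed

abbreviation XX where "XX A \<equiv> rep A S0 {0..n}"

lemma PT1: "ptrace tau (mpow (XX A) k) = (\<Sum>u\<in>W n k. cm (tau (mon S0 u)) (Aw A u))"
  by (simp add: mpow_rep ptrace_rep)

lemma PT2: "ptrace tau (mmul (mmul (mpow (XX A) a) (tens1 sc B)) (mpow (XX A) b))
   = (\<Sum>u\<in>W n a. \<Sum>v\<in>W n b. cm (tau (mon S0 (u@v))) (Aw A u ** B ** Aw A v))"
  by (simp add: Y_rep ptrace_rep sum.cartesian_product case_prod_unfold)

lemma SDpart1:
  assumes j: "j \<in> {1..n}"
  shows "(\<Sum>w\<in>W n L. cm (tau (mon S0 w * s j)) (Aw A w ** A j))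
     = (\<Sum>l<L. ptrace tau (mpow (XX A) l) ** A j ** ptrace tau (mpow (XX A) (L - 1 - l)) ** A j)"
proof -
  let ?f = "\<lambda>a. tau (mon S0 a)"
  have "(\<Sum>w\<in>W n L. cm (tau (mon S0 w * s j)) (Aw A w ** A j))
      = (\<Sum>w\<in>W n L. cm (SDsum j ?f ?f w) (mat 1 ** Aw A w ** A j))"
    using j by (intro sum.cong refl) (simp add: tau_SD W_def)
  also have "\<dots> = (\<Sum>l<L. \<Sum>u\<in>W n l. \<Sum>v\<in>W n (L - 1 - l). cm (?f u * ?f v) (mat 1 ** Aw A u ** A j ** Aw A v ** A j))"
    using j by (intro GEN) auto
  also have "\<dots> = (\<Sum>l<L. ptrace tau (mpow (XX A) l) ** A j ** ptrace tau (mpow (XX A) (L - 1 - l)) ** A j)"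
    by (simp add: PT1 FACT)
  finally show ?thesis .
qed

lemma ID1:
  assumes p: "p \<ge> 2"
  shows "ptrace tau (mpow (XX A) p) = ptrace tau (mpow (XX A) (p - 1)) ** A 0
     + (\<Sum>i=1..n. \<Sum>k=0..p-2. ptrace tau (mpow (XX A) k) ** A i ** ptrace tau (mpow (XX A) (p - 2 - k)) ** A i)"
proof -
  obtain L where L: "p = Suc L" using p by (cases p) auto
  have "mpow (XX A) p = mmul (rep (Aw A) (mon S0) (W n L)) (XX A)"
    unfolding L mpow.simps(2) mpow_rep[of A L] ..
  then have "ptrace tau (mpow (XX A) p) = (\<Sum>x\<in>W n L. cm (tau (mon S0 x)) (Aw A x)) ** A 0 +
     (\<Sum>j\<in>{1..n}. \<Sum>w\<in>W n L. cm (tau (mon S0 w * s j)) (Aw A w ** A j))"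
    by (simp add: PA)
  also have "(\<Sum>x\<in>W n L. cm (tau (mon S0 x)) (Aw A x)) = ptrace tau (mpow (XX A) (p - 1))"
    using L by (simp add: PT1)
  also have "(\<Sum>j\<in>{1..n}. \<Sum>w\<in>W n L. cm (tau (mon S0 w * s j)) (Aw A w ** A j))
     = (\<Sum>i=1..n. \<Sum>k=0..p-2. ptrace tau (mpow (XX A) k) ** A i ** ptrace tau (mpow (XX A) (p - 2 - k)) ** A i)"
  proof (rule sum.cong[OF refl])
    fix j assume j: "j \<in> {1..n}"
    have e: "{0..p-2} = {..<L}" using L p by auto
    show "(\<Sum>w\<in>W n L. cm (tau (mon S0 w * s j)) (Aw A w ** A j)) =
       (\<Sum>k=0..p-2. ptrace tau (mpow (XX A) k) ** A j ** ptrace tau (mpow (XX A) (p - 2 - k)) ** A j)"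
      unfolding SDpart1[OF j] e using L by (intro sum.cong refl) simp
  qed
  finally show ?thesis .
qed

lemma SDpart2:
  assumes j: "j \<in> {1..n}"
  shows "(\<Sum>u\<in>W n p. \<Sum>v\<in>W n q'. cm (tau (mon S0 (u@v) * s j)) (Aw A u ** B ** Aw A v ** A j))
     = (\<Sum>k<p. ptrace tau (mpow (XX A) k) ** A j ** ptrace tau (mmul (mmul (mpow (XX A) (p - 1 - k)) (tens1 sc B)) (mpow (XX A) q')) ** A j)
     + (\<Sum>k<q'. ptrace tau (mmul (mmul (mpow (XX A) p) (tens1 sc B)) (mpow (XX A) k)) ** A j ** ptrace tau (mpow (XX A) (q' - 1 - k)) ** A j)"
proof -
  let ?f = "\<lambda>a. tau (mon S0 a)"
  have jn: "j \<le> n" using j by auto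
  have "(\<Sum>u\<in>W n p. \<Sum>v\<in>W n q'. cm (tau (mon S0 (u@v) * s j)) (Aw A u ** B ** Aw A v ** A j))
     = (\<Sum>u\<in>W n p. \<Sum>v\<in>W n q'. cm (SDsum j ?f (\<lambda>b. ?f (b@v)) u) (mat 1 ** Aw A u ** (B ** Aw A v ** A j))
          + cm (SDsum j (\<lambda>a. ?f (u@a)) ?f v) ((Aw A u ** B) ** Aw A v ** A j))"
  proof (intro sum.cong refl)
    fix u v assume "u \<in> W n p" "v \<in> W n q'"
    then have "set (u@v) \<subseteq> {0..n}" by (auto simp: W_def)
    then have t: "tau (mon S0 (u@v) * s j) = SDsum j ?f (\<lambda>b. ?f (b@v)) u + SDsum j (\<lambda>a. ?f (u@a)) ?f v"
      using tau_SD[OF j] by (simp only: SDsum_append)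
    show "cm (tau (mon S0 (u@v) * s j)) (Aw A u ** B ** Aw A v ** A j) =
      cm (SDsum j ?f (\<lambda>b. ?f (b@v)) u) (mat 1 ** Aw A u ** (B ** Aw A v ** A j))
          + cm (SDsum j (\<lambda>a. ?f (u@a)) ?f v) ((Aw A u ** B) ** Aw A v ** A j)"
      by (simp only: t cm_add) (simp add: matrix_mul_assoc)
  qed
  also have "\<dots> = (\<Sum>v\<in>W n q'. \<Sum>u\<in>W n p. cm (SDsum j ?f (\<lambda>b. ?f (b@v)) u) (mat 1 ** Aw A u ** (B ** Aw A v ** A j)))
     + (\<Sum>u\<in>W n p. \<Sum>v\<in>W n q'. cm (SDsum j (\<lambda>a. ?f (u@a)) ?f v) ((Aw A u ** B) ** Aw A v ** A j))"
    by (simp add: sum.distrib sum.swap[of _ "W n p"])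
  also have "(\<Sum>v\<in>W n q'. \<Sum>u\<in>W n p. cm (SDsum j ?f (\<lambda>b. ?f (b@v)) u) (mat 1 ** Aw A u ** (B ** Aw A v ** A j)))
     = (\<Sum>v\<in>W n q'. \<Sum>l<p. \<Sum>u1\<in>W n l. \<Sum>u2\<in>W n (p - 1 - l). cm (?f u1 * ?f (u2@v)) (mat 1 ** Aw A u1 ** A j ** Aw A u2 ** (B ** Aw A v ** A j)))"
    by (intro sum.cong refl GEN jn)
  also have "\<dots> = (\<Sum>l<p. \<Sum>u1\<in>W n l. \<Sum>u2\<in>W n (p - 1 - l). \<Sum>v\<in>W n q'. cm (?f u1 * ?f (u2@v)) (mat 1 ** Aw A u1 ** A j ** Aw A u2 ** (B ** Aw A v ** A j)))"
    by (rule swap3)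
  also have "\<dots> = (\<Sum>k<p. ptrace tau (mpow (XX A) k) ** A j ** ptrace tau (mmul (mmul (mpow (XX A) (p - 1 - k)) (tens1 sc B)) (mpow (XX A) q')) ** A j)"
    by (simp add: PT1 PT2 FACT2 matrix_mul_assoc)
  also have "(\<Sum>u\<in>W n p. \<Sum>v\<in>W n q'. cm (SDsum j (\<lambda>a. ?f (u@a)) ?f v) ((Aw A u ** B) ** Aw A v ** A j))
     = (\<Sum>u\<in>W n p. \<Sum>l<q'. \<Sum>v1\<in>W n l. \<Sum>v2\<in>W n (q' - 1 - l). cm (?f (u@v1) * ?f v2) ((Aw A u ** B) ** Aw A v1 ** A j ** Aw A v2 ** A j))"
    by (intro sum.cong refl GEN jn)
  also have "\<dots> = (\<Sum>l<q'. \<Sum>u\<in>W n p. \<Sum>v1\<in>W n l. \<Sum>v2\<in>W n (q' - 1 - l). cm (?f (u@v1) * ?f v2) ((Aw A u ** B) ** Aw A v1 ** A j ** Aw A v2 ** A j))"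
    by (rule sum.swap)
  also have "\<dots> = (\<Sum>k<q'. ptrace tau (mmul (mmul (mpow (XX A) p) (tens1 sc B)) (mpow (XX A) k)) ** A j ** ptrace tau (mpow (XX A) (q' - 1 - k)) ** A j)"
    by (simp add: PT1 PT2 FACT3 matrix_mul_assoc)
  finally show ?thesis .
qed

lemma ID2:
  assumes p: "p \<ge> 1" and q: "q \<ge> 1"
  shows "ptrace tau (mmul (mmul (mpow (XX A) p) (tens1 sc B)) (mpow (XX A) q)) =
              ptrace tau (mmul (mmul (mpow (XX A) p) (tens1 sc B)) (mpow (XX A) (q - 1))) ** A 0
              + (\<Sum>i=1..n. \<Sum>k=0..p-1.
                   ptrace tau (mpow (XX A) k) ** A i
                   ** ptrace tau (mmul (mmul (mpow (XX A) (p - 1 - k)) (tens1 sc B)) (mpow (XX A) (q - 1))) ** A i)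
              + (if q \<ge> 2 then
                   (\<Sum>i=1..n. \<Sum>k=0..q-2.
                     ptrace tau (mmul (mmul (mpow (XX A) p) (tens1 sc B)) (mpow (XX A) k)) ** A i
                     ** ptrace tau (mpow (XX A) (q - 2 - k)) ** A i)
                 else 0)"
proof -
  obtain q' where q': "q = Suc q'" using q by (cases q) auto
  let ?C = "\<lambda>(u,v). Aw A u ** B ** Aw A v" and ?m = "\<lambda>(u,v). mon S0 (u@v)"
  have "mmul (mmul (mpow (XX A) p) (tens1 sc B)) (mpow (XX A) q) = mmul (mmul (mmul (mpow (XX A) p) (tens1 sc B)) (mpow (XX A) q')) (XX A)"
    unfolding q' mpow.simps(2) mmul_assoc ..
  also have "\<dots> = mmul (rep ?C ?m (W n p \<times> W n q')) (XX A)"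
    by (simp only: Y_rep)
  finally have "ptrace tau (mmul (mmul (mpow (XX A) p) (tens1 sc B)) (mpow (XX A) q)) =
     (\<Sum>x\<in>W n p \<times> W n q'. cm (tau (?m x)) (?C x)) ** A 0 +
     (\<Sum>j\<in>{1..n}. \<Sum>x\<in>W n p \<times> W n q'. cm (tau (?m x * s j)) (?C x ** A j))"
    by (simp add: PA)
  also have "(\<Sum>x\<in>W n p \<times> W n q'. cm (tau (?m x)) (?C x)) = ptrace tau (mmul (mmul (mpow (XX A) p) (tens1 sc B)) (mpow (XX A) (q - 1)))"
    using q' by (simp add: Y_rep ptrace_rep)
  also have "(\<Sum>j\<in>{1..n}. \<Sum>x\<in>W n p \<times> W n q'. cm (tau (?m x * s j)) (?C x ** A j))
    = (\<Sum>j\<in>{1..n}. (\<Sum>k<p. ptrace tau (mpow (XX A) k) ** A j ** ptrace tau (mmul (mmul (mpow (XX A) (p - 1 - k)) (tens1 sc B)) (mpow (XX A) q')) ** A j)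
     + (\<Sum>k<q'. ptrace tau (mmul (mmul (mpow (XX A) p) (tens1 sc B)) (mpow (XX A) k)) ** A j ** ptrace tau (mpow (XX A) (q' - 1 - k)) ** A j))"
  proof (rule sum.cong[OF refl])
    fix j assume j: "j \<in> {1..n}"
    have "(\<Sum>x\<in>W n p \<times> W n q'. cm (tau (?m x * s j)) (?C x ** A j)) =
      (\<Sum>u\<in>W n p. \<Sum>v\<in>W n q'. cm (tau (mon S0 (u@v) * s j)) (Aw A u ** B ** Aw A v ** A j))"
      by (simp add: sum.cartesian_product case_prod_unfold)
    then show "(\<Sum>x\<in>W n p \<times> W n q'. cm (tau (?m x * s j)) (?C x ** A j)) = (\<Sum>k<p. ptrace tau (mpow (XX A) k) ** A j ** ptrace tau (mmul (mmul (mpow (XX A) (p - 1 - k)) (tens1 sc B)) (mpow (XX A) q')) ** A j)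
     + (\<Sum>k<q'. ptrace tau (mmul (mmul (mpow (XX A) p) (tens1 sc B)) (mpow (XX A) k)) ** A j ** ptrace tau (mpow (XX A) (q' - 1 - k)) ** A j)"
      using SDpart2[OF j] by simp
  qed
  also have "\<dots> = (\<Sum>i=1..n. \<Sum>k=0..p-1.
                   ptrace tau (mpow (XX A) k) ** A i
                   ** ptrace tau (mmul (mmul (mpow (XX A) (p - 1 - k)) (tens1 sc B)) (mpow (XX A) (q - 1))) ** A i)
      + (if q \<ge> 2 then
                   (\<Sum>i=1..n. \<Sum>k=0..q-2.
                     ptrace tau (mmul (mmul (mpow (XX A) p) (tens1 sc B)) (mpow (XX A) k)) ** A i
                     ** ptrace tau (mpow (XX A) (q - 2 - k)) ** A i)
                 else 0)"
  proof -
    have e1: "{0..p-1} = {..<p}" using p by auto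
    have e2: "q \<ge> 2 \<Longrightarrow> {0..q-2} = {..<q'}" using q' by auto
    show ?thesis
    proof (cases "q \<ge> 2")
      case True
      then show ?thesis unfolding sum.distrib e1 e2[OF True] using q' by simp
    next
      case False
      then have "q' = 0" using q' by simp
      then show ?thesis unfolding sum.distrib e1 using q' by simp
    qed
  qed
  finally show ?thesis by (simp add: add.assoc)
qed

end


theorem lemma6p1:
  fixes sc :: "complex \<Rightarrow> 'a::ring_1 \<Rightarrow> 'a" and st :: "'a \<Rightarrow> 'a" and nm :: "'a \<Rightarrow> real"
    and tau :: "'a \<Rightarrow> complex" and s :: "nat \<Rightarrow> 'a" and n :: nat
    and A :: "nat \<Rightarrow> complex^'d::finite^'d" and X :: "'d \<Rightarrow> 'd \<Rightarrow> 'a"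
  assumes "cstar_prob_space sc st nm tau"
    and "\<forall>i\<in>{1..n}. std_semicircular sc st tau (s i)"
    and "free_family sc tau {1..n} s"
    and "X = Xfree sc A s n"
  shows "(\<forall>p::nat. p \<ge> 2 \<longrightarrow>
            ptrace tau (mpow X p) =
              ptrace tau (mpow X (p - 1)) ** A 0
              + (\<Sum>i=1..n. \<Sum>k=0..p-2.
                   ptrace tau (mpow X k) ** A i ** ptrace tau (mpow X (p - 2 - k)) ** A i))
       \<and> (\<forall>(B::complex^'d^'d) (p::nat) (q::nat). p \<ge> 1 \<and> q \<ge> 1 \<longrightarrow>
            ptrace tau (mmul (mmul (mpow X p) (tens1 sc B)) (mpow X q)) =
              ptrace tau (mmul (mmul (mpow X p) (tens1 sc B)) (mpow X (q - 1))) ** A 0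
              + (\<Sum>i=1..n. \<Sum>k=0..p-1.
                   ptrace tau (mpow X k) ** A i
                   ** ptrace tau (mmul (mmul (mpow X (p - 1 - k)) (tens1 sc B)) (mpow X (q - 1))) ** A i)
              + (if q \<ge> 2 then
                   (\<Sum>i=1..n. \<Sum>k=0..q-2.
                     ptrace tau (mmul (mmul (mpow X p) (tens1 sc B)) (mpow X k)) ** A i
                     ** ptrace tau (mpow X (q - 2 - k)) ** A i)
                 else 0))"
proof -
  interpret frs sc st nm tau s n
    by unfold_locales (use assms in auto)
  have X: "X = rep A S0 {0..n}" using assms(4) X_rep by simp
  show ?thesis unfolding X
    apply (intro conjI allI impI)
     apply (erule ID1)
    apply (rule ID2)
     apply simp_all
    done
qed

end
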